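(* Let $W$ be a random variable with $\mathbb P(W>0)=1$, $\mathbb E[W]=1$ and $\mathbb E[W\log_2 W]<1$, let $\rho$ be the random cascade metric on $[0,1]$ built from $W$ (see context), and let $\phi(s):=s-\log_2\mathbb E[W^s]$. Then for all $x,y\in[0,1]$ and $s\in(0,1]$, $$\mathbb E[\rho(x,y)^s]\le 8\,|x-y|^{\phi(s)}.$$
   Context: For $n\ge 0$ let $\mathcal I_n$ be the set of dyadic intervals $[k2^{-n},(k+1)2^{-n}]$, $k\in\{0,\dots,2^n-1\}$, and $\mathcal I=\bigcup_n\mathcal I_n$. Let $(W_I)_{I\in\mathcal I}$ be i.i.d. copies of $W$. For $x\in[0,1]$ let $I_j(x)$ be the interval of $\mathcal I_j$ containing $x$ (if there are two, the one whose maximum is $x$). Let $\mu_0$ be Lebesgue measure on $[0,1]$ and $\mu_n:=w_n\,\mu_0$ where $w_n(x):=\prod_{j=0}^{n-1}W_{I_j(x)}$. The weak limit $\mu:=\lim_{n\to\infty}\mu_n$ exists almost surely. The random metric is $\rho(x,y):=\mu[x,y]$ for $0\le x\le y\le 1$ (and symmetrically). *)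

theory Defs
  imports "HOL-Probability.Probability"
begin

text \<open>Index k of the dyadic interval of generation j containing x in [0,1]; if x lies
  in two such intervals, the one whose maximum is x is chosen.\<close>
definition dyadic_index :: "nat \<Rightarrow> real \<Rightarrow> nat" where
  "dyadic_index j x = nat (max 0 (\<lceil>x * 2 ^ j\<rceil> - 1))"

definition cascade_weight ::
  "(nat \<times> nat \<Rightarrow> 'a \<Rightarrow> real) \<Rightarrow> nat \<Rightarrow> 'a \<Rightarrow> real \<Rightarrow> real" where
  "cascade_weight W n \<omega> x = (\<Prod>j<n. W (j, dyadic_index j x) \<omega>)"

definition cascade_measure ::
  "(nat \<times> nat \<Rightarrow> 'a \<Rightarrow> real) \<Rightarrow> nat \<Rightarrow> 'a \<Rightarrow> real measure" where
  "cascade_measure W n \<omega> =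
     density lborel (\<lambda>x. indicator {0..1} x * ennreal (cascade_weight W n \<omega> x))"

definition weak_conv_measures :: "(nat \<Rightarrow> real measure) \<Rightarrow> real measure \<Rightarrow> bool" where
  "weak_conv_measures Ms N \<longleftrightarrow>
     sets N = sets borel \<and> finite_measure N \<and>
     (\<forall>f :: real \<Rightarrow> real. continuous_on UNIV f \<and> bounded (range f) \<longrightarrow>
        (\<lambda>n. \<integral>x. f x \<partial>Ms n) \<longlonglongrightarrow> (\<integral>x. f x \<partial>N))"

end

theory Submission
  imports Defs
begin



lemma powr_tangent:
  fixes t s :: real
  assumes "0 \<le> t" "0 < s" "s \<le> 1"
  shows "t powr s \<le> 1 - s + s * t"
proof (cases "t = 0")
  case True then show ?thesis using assms by simp
next
  case False
  then have "t powr s * 1 powr (1 - s) \<le> s * t + (1 - s) * 1"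
    using assms by (intro Youngs_inequality_0) auto
  then show ?thesis by simp
qed

lemma powr_subadd:
  fixes x y s :: real
  assumes "0 \<le> x" "0 \<le> y" "0 < s" "s \<le> 1"
  shows "(x + y) powr s \<le> x powr s + y powr s"
proof (cases "x + y = 0")
  case True then show ?thesis using assms by auto
next
  case False
  then have xy: "x + y > 0" using assms by auto
  have a: "x / (x+y) \<le> (x/(x+y)) powr s"
  proof -
    have "(x/(x+y)) powr 1 \<le> (x/(x+y)) powr s"
      using assms xy by (intro powr_mono') (auto simp: field_simps)
    then show ?thesis using assms xy by simp
  qed
  have b: "y / (x+y) \<le> (y/(x+y)) powr s"
  proof -
    have "(y/(x+y)) powr 1 \<le> (y/(x+y)) powr s"
      using assms xy by (intro powr_mono') (auto simp: field_simps)
    then show ?thesis using assms xy by simp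
  qed
  have "1 = x/(x+y) + y/(x+y)" using xy by (simp add: add_divide_distrib[symmetric])
  also have "\<dots> \<le> (x/(x+y)) powr s + (y/(x+y)) powr s" using a b by simp
  also have "\<dots> = (x powr s + y powr s) / (x+y) powr s"
    using assms xy by (simp add: powr_divide add_divide_distrib)
  finally show ?thesis using xy by (simp add: field_simps)
qed

lemma powr_subadd_sum:
  fixes f :: "'b \<Rightarrow> real" and s :: real
  assumes "finite J" "\<And>j. j \<in> J \<Longrightarrow> 0 \<le> f j" "0 < s" "s \<le> 1"
  shows "(\<Sum>j\<in>J. f j) powr s \<le> (\<Sum>j\<in>J. f j powr s)"
  using assms
proof (induction J rule: finite_induct)
  case empty then show ?case by simp
next
  case (insert a F)
  have "(\<Sum>j\<in>insert a F. f j) powr s = (f a + (\<Sum>j\<in>F. f j)) powr s"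
    using insert by simp
  also have "\<dots> \<le> f a powr s + (\<Sum>j\<in>F. f j) powr s"
    using insert by (intro powr_subadd) (auto intro: sum_nonneg)
  also have "\<dots> \<le> f a powr s + (\<Sum>j\<in>F. f j powr s)"
    using insert by auto
  finally show ?case using insert by simp
qed




lemma dyadic_index_eq:
  fixes t :: real
  assumes "real K / 2^n < t" "t \<le> real (K+1) / 2^n" "i \<le> n"
  shows "dyadic_index i t = K div 2^(n-i)"
proof -
  define q :: nat where "q = 2^(n-i)"
  define j where "j = K div q"
  have q: "q > 0" by (simp add: q_def)
  have n: "(2::real)^n = 2^i * real q" using assms(3)
    by (simp add: q_def power_add[symmetric])
  have t1: "real K / real q < t * 2^i" using assms(1) q n
    by (simp add: field_simps)
  have t2: "t * 2^i \<le> real (K+1) / real q" using assms(2) q n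
    by (simp add: field_simps)
  have "j * q \<le> K" by (simp add: j_def)
  then have "real j \<le> real K / real q" using q by (simp add: field_simps flip: of_nat_mult)
  with t1 have l: "real j < t * 2^i" by linarith
  have "K < (j+1) * q" using q by (simp add: j_def) (metis div_mult_mod_eq mod_less_divisor add_less_mono1 distrib_right mult_1 add.commute)
  then have "K + 1 \<le> (j+1) * q" by simp
  then have "real (K+1) \<le> real ((j+1) * q)" by linarith
  then have "real (K+1) / real q \<le> real j + 1" using q by (simp add: field_simps)
  with t2 have u: "t * 2^i \<le> real j + 1" by linarith
  have "\<lceil>t * 2^i\<rceil> = int j + 1"
    using l u by (intro ceiling_unique) auto
  then show ?thesis by (simp add: dyadic_index_def j_def q_def mult.commute)
qed




lemma step_integral_le:
  fixes V :: "nat \<times> nat \<Rightarrow> real"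
  assumes "\<alpha> \<le> \<beta>"
  shows "(\<integral>\<^sup>+t. indicator {real \<alpha> / 2^n .. real \<beta> / 2^n} t *
            ennreal (\<Prod>i<n. V (i, dyadic_index i t)) \<partial>lborel)
         \<le> (\<Sum>K\<in>{\<alpha>..<\<beta>}. ennreal ((\<Prod>i<n. V (i, K div 2^(n-i))) / 2^n))"
proof -
  define P where "P K = (\<Prod>i<n. V (i, K div 2^(n-i)))" for K
  have pt: "indicator {real \<alpha> / 2^n .. real \<beta> / 2^n} t * ennreal (\<Prod>i<n. V (i, dyadic_index i t))
      \<le> (\<Sum>K\<in>{\<alpha>..<\<beta>}. ennreal (P K) * indicator {real K / 2^n <.. real (K+1) / 2^n} t)"
    if tne: "t \<noteq> real \<alpha> / 2^n" for t
  proof (cases "t \<in> {real \<alpha> / 2^n .. real \<beta> / 2^n}")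
    case False then show ?thesis by simp
  next
    case True
    define K where "K = nat (\<lceil>t * 2^n\<rceil> - 1)"
    have ta: "real \<alpha> < t * 2^n" using True tne by (auto simp: field_simps)
    have tb: "t * 2^n \<le> real \<beta>" using True by (auto simp: field_simps)
    have c0: "\<lceil>t * 2^n\<rceil> \<ge> 1" using ta
      by (metis ceiling_le_zero not_less of_nat_0_le_iff order_less_le_trans zero_less_one_class.zero_le_one int_one_le_iff_zero_less ceiling_le_iff of_int_0 linorder_not_le)
    have cK: "\<lceil>t * 2^n\<rceil> = int K + 1" using c0 by (simp add: K_def)
    have K1: "real K < t * 2^n" using cK by linarith
    have K2: "t * 2^n \<le> real K + 1" using cK by linarith
    have Ka: "\<alpha> \<le> K"
    proof -
      have "real \<alpha> < real K + 1" using ta K2 by linarith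
      then show ?thesis by linarith
    qed
    have Kb: "K < \<beta>"
    proof -
      have "real K < real \<beta>" using K1 tb by linarith
      then show ?thesis by linarith
    qed
    have t1: "real K / 2^n < t" using K1 by (simp add: field_simps)
    have t2: "t \<le> real (K+1) / 2^n" using K2 by (simp add: field_simps)
    have eq: "(\<Prod>i<n. V (i, dyadic_index i t)) = P K"
      unfolding P_def using dyadic_index_eq[OF t1 t2] by (intro prod.cong) auto
    have "indicator {real \<alpha> / 2^n .. real \<beta> / 2^n} t * ennreal (\<Prod>i<n. V (i, dyadic_index i t))
        = ennreal (P K) * indicator {real K / 2^n <.. real (K+1) / 2^n} t"
      using True t1 t2 eq by simp
    also have "\<dots> \<le> (\<Sum>K\<in>{\<alpha>..<\<beta>}. ennreal (P K) * indicator {real K / 2^n <.. real (K+1) / 2^n} t)"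
      using Ka Kb by (intro member_le_sum) auto
    finally show ?thesis .
  qed
  have "(\<integral>\<^sup>+t. indicator {real \<alpha> / 2^n .. real \<beta> / 2^n} t *
            ennreal (\<Prod>i<n. V (i, dyadic_index i t)) \<partial>lborel)
     \<le> (\<integral>\<^sup>+t. (\<Sum>K\<in>{\<alpha>..<\<beta>}. ennreal (P K) * indicator {real K / 2^n <.. real (K+1) / 2^n} t) \<partial>lborel)"
    by (intro nn_integral_mono_AE eventually_mono[OF AE_lborel_singleton[of "real \<alpha> / 2^n"]] pt)
  also have "\<dots> = (\<Sum>K\<in>{\<alpha>..<\<beta>}. (\<integral>\<^sup>+t. ennreal (P K) * indicator {real K / 2^n <.. real (K+1) / 2^n} t \<partial>lborel))"
    by (intro nn_integral_sum) auto
  also have "\<dots> = (\<Sum>K\<in>{\<alpha>..<\<beta>}. ennreal (P K / 2^n))"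
  proof (intro sum.cong refl)
    fix K
    have "(\<integral>\<^sup>+t. ennreal (P K) * indicator {real K / 2^n <.. real (K+1) / 2^n} t \<partial>lborel)
        = ennreal (P K) * ennreal (real (K+1) / 2^n - real K / 2^n)"
      by (subst nn_integral_cmult_indicator) (auto simp: field_simps)
    also have "\<dots> = ennreal (P K / 2^n)"
      by (cases "P K \<ge> 0") (auto simp: field_simps ennreal_mult[symmetric] ennreal_neg)
    finally show "(\<integral>\<^sup>+t. ennreal (P K) * indicator {real K / 2^n <.. real (K+1) / 2^n} t \<partial>lborel) = ennreal (P K / 2^n)" .
  qed
  finally show ?thesis by (simp add: P_def)
qed




locale casc = prob_space M for M :: "'a measure" +
  fixes W0 :: "'a \<Rightarrow> real" and W :: "nat \<times> nat \<Rightarrow> 'a \<Rightarrow> real"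
  assumes W0m: "W0 \<in> borel_measurable M"
  and indep: "indep_vars (\<lambda>_. borel) W {(n, k). k < 2 ^ n}"
  and Wdistr: "\<And>n k. k < 2 ^ n \<Longrightarrow> distr M borel (W (n, k)) = distr M borel W0"
  and W0pos: "AE \<omega> in M. W0 \<omega> > 0"
  and W0int: "integrable M W0" and W0E: "(\<integral>\<omega>. W0 \<omega> \<partial>M) = 1"
begin

lemma Wm: "k < 2^n \<Longrightarrow> W (n, k) \<in> borel_measurable M"
  using indep unfolding indep_vars_def by auto

lemma nnW:
  assumes "k < 2^n" "g \<in> borel_measurable borel"
  shows "(\<integral>\<^sup>+\<omega>. g (W (n,k) \<omega>) \<partial>M) = (\<integral>\<^sup>+\<omega>. g (W0 \<omega>) \<partial>M)"
proof -
  have "(\<integral>\<^sup>+\<omega>. g (W (n,k) \<omega>) \<partial>M) = (\<integral>\<^sup>+x. g x \<partial>distr M borel (W (n,k)))"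
    using assms Wm by (subst nn_integral_distr) auto
  also have "\<dots> = (\<integral>\<^sup>+x. g x \<partial>distr M borel W0)" using Wdistr[OF assms(1)] by simp
  also have "\<dots> = (\<integral>\<^sup>+\<omega>. g (W0 \<omega>) \<partial>M)"
    using assms W0m by (subst nn_integral_distr) auto
  finally show ?thesis .
qed

lemma Wpos: "AE \<omega> in M. \<forall>n k. k < 2^n \<longrightarrow> W (n,k) \<omega> > 0"
proof -
  have "AE \<omega> in M. W (n,k) \<omega> > 0" if "k < 2^n" for n k
  proof -
    have "AE x in distr M borel W0. x > 0"
      using W0pos W0m by (subst AE_distr_iff) auto
    then have "AE x in distr M borel (W (n,k)). x > 0" unfolding Wdistr[OF that] .
    then show ?thesis by (rule AE_distrD[OF Wm[OF that]])
  qed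
  then have "\<forall>p::nat\<times>nat. AE \<omega> in M. snd p < 2^fst p \<longrightarrow> W p \<omega> > 0" by auto
  then have "AE \<omega> in M. \<forall>p::nat\<times>nat. snd p < 2^fst p \<longrightarrow> W p \<omega> > 0"
    by (subst AE_all_countable) auto
  then show ?thesis by (rule eventually_mono) auto
qed

lemma prod_nn:
  fixes g :: "nat \<Rightarrow> real \<Rightarrow> ennreal" and c :: "nat \<Rightarrow> nat"
  assumes c: "\<And>i. i < n \<Longrightarrow> c i < 2^i" and g: "\<And>i. g i \<in> borel_measurable borel"
  shows "(\<integral>\<^sup>+\<omega>. (\<Prod>i<n. g i (W (i, c i) \<omega>)) \<partial>M) = (\<Prod>i<n. \<integral>\<^sup>+\<omega>. g i (W0 \<omega>) \<partial>M)"
proof -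
  define I where "I = (\<lambda>i. (i, c i)) ` {..<n}"
  have inj: "inj_on (\<lambda>i. (i, c i)) {..<n}" by (auto simp: inj_on_def)
  have sub: "I \<subseteq> {(n, k). k < 2 ^ n}" using c by (auto simp: I_def)
  have ind: "indep_vars (\<lambda>_. borel) (\<lambda>p \<omega>. g (fst p) (W p \<omega>)) I"
    by (rule indep_vars_compose2[OF indep_vars_subset[OF indep sub]]) (use g in auto)
  have "(\<integral>\<^sup>+\<omega>. (\<Prod>i<n. g i (W (i, c i) \<omega>)) \<partial>M) = (\<integral>\<^sup>+\<omega>. (\<Prod>p\<in>I. g (fst p) (W p \<omega>)) \<partial>M)"
    unfolding I_def by (subst prod.reindex[OF inj]) simp
  also have "\<dots> = (\<Prod>p\<in>I. \<integral>\<^sup>+\<omega>. g (fst p) (W p \<omega>) \<partial>M)"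
    by (rule indep_vars_nn_integral[OF _ ind]) (auto simp: I_def)
  also have "\<dots> = (\<Prod>i<n. \<integral>\<^sup>+\<omega>. g i (W (i, c i) \<omega>) \<partial>M)"
    unfolding I_def by (subst prod.reindex[OF inj]) simp
  also have "\<dots> = (\<Prod>i<n. \<integral>\<^sup>+\<omega>. g i (W0 \<omega>) \<partial>M)"
    by (intro prod.cong refl nnW c g) auto
  finally show ?thesis .
qed

end



context casc begin

lemma W0s_int:
  assumes "0 < s" "s \<le> 1"
  shows "integrable M (\<lambda>\<omega>. W0 \<omega> powr s)"
proof (rule Bochner_Integration.integrable_bound[of _ "\<lambda>\<omega>. 1 + W0 \<omega>"])
  show "integrable M (\<lambda>\<omega>. 1 + W0 \<omega>)" using W0int by auto
  show "(\<lambda>\<omega>. W0 \<omega> powr s) \<in> borel_measurable M" using W0m by measurable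
  show "AE \<omega> in M. norm (W0 \<omega> powr s) \<le> norm (1 + W0 \<omega>)"
  proof (rule eventually_mono[OF W0pos])
    fix \<omega> assume p: "W0 \<omega> > 0"
    have "W0 \<omega> powr s \<le> 1 - s + s * W0 \<omega>" using p assms by (intro powr_tangent) auto
    also have "\<dots> \<le> 1 + W0 \<omega>" using p assms by (smt (verit) mult_left_le_one_le)
    finally show "norm (W0 \<omega> powr s) \<le> norm (1 + W0 \<omega>)" using p by simp
  qed
qed

lemma nn_W0: "(\<integral>\<^sup>+\<omega>. ennreal (W0 \<omega>) \<partial>M) = 1"
  using W0int W0E W0pos by (subst nn_integral_eq_integral) (auto elim: eventually_mono)

lemma nn_W0s: "0 < s \<Longrightarrow> s \<le> 1 \<Longrightarrow>
   (\<integral>\<^sup>+\<omega>. ennreal (W0 \<omega> powr s) \<partial>M) = ennreal (\<integral>\<omega>. W0 \<omega> powr s \<partial>M)"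
  using W0s_int by (subst nn_integral_eq_integral) auto

lemma prod_nn_m:
  fixes c :: "nat \<Rightarrow> nat"
  assumes c: "\<And>i. i < n \<Longrightarrow> c i < 2^i" and mn: "m \<le> n" and s: "0 < s" "s \<le> 1"
  shows "(\<integral>\<^sup>+\<omega>. (\<Prod>i<n. ennreal (if i < m then W (i, c i) \<omega> powr s else W (i, c i) \<omega>)) \<partial>M)
     = ennreal (\<integral>\<omega>. W0 \<omega> powr s \<partial>M) ^ m"
proof -
  have "(\<integral>\<^sup>+\<omega>. (\<Prod>i<n. ennreal (if i < m then W (i, c i) \<omega> powr s else W (i, c i) \<omega>)) \<partial>M)
    = (\<Prod>i<n. \<integral>\<^sup>+\<omega>. ennreal (if i < m then W0 \<omega> powr s else W0 \<omega>) \<partial>M)"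
    by (rule prod_nn[where g = "\<lambda>i t. ennreal (if i < m then t powr s else t)", OF c]) auto
  also have "\<dots> = (\<Prod>i<n. if i < m then ennreal (\<integral>\<omega>. W0 \<omega> powr s \<partial>M) else 1)"
    by (intro prod.cong refl) (auto simp: nn_W0 nn_W0s s)
  also have "\<dots> = ennreal (\<integral>\<omega>. W0 \<omega> powr s \<partial>M) ^ m"
  proof -
    have "{..<n} \<inter> {i. i < m} = {..<m}" using mn by auto
    then show ?thesis by (simp add: prod.If_cases)
  qed
  finally show ?thesis .
qed

end



lemma div_lt_pow: "K < 2^n \<Longrightarrow> i \<le> n \<Longrightarrow> K div 2^(n-i) < (2::nat)^i"
  by (metis less_mult_imp_div_less power_add le_add_diff_inverse mult.commute)

lemma ennreal_lin: fixes a b x y :: real shows "0 \<le> a \<Longrightarrow> 0 \<le> b \<Longrightarrow> 0 \<le> x \<Longrightarrow> 0 \<le> y \<Longrightarrow>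
  ennreal (a * x + b * y) = ennreal a * ennreal x + ennreal b * ennreal y"
proof -
  assume h: "0 \<le> a" "0 \<le> b" "0 \<le> x" "0 \<le> y"
  have "ennreal (a * x + b * y) = ennreal (a * x) + ennreal (b * y)"
    using h by (intro ennreal_plus) auto
  also have "\<dots> = ennreal a * ennreal x + ennreal b * ennreal y"
    using h by (simp add: ennreal_mult)
  finally show ?thesis .
qed

context casc begin

lemma meas_prod:
  assumes "\<And>i. i < n \<Longrightarrow> c i < 2^i"
  shows "(\<lambda>\<omega>. \<Prod>i<n. ennreal (if i < m then W (i, c i) \<omega> powr s else W (i, c i) \<omega>)) \<in> borel_measurable M"
proof (rule borel_measurable_prod_ennreal)
  fix i assume "i \<in> {..<n}"
  then have "W (i, c i) \<in> borel_measurable M" using assms Wm by auto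
  then show "(\<lambda>\<omega>. ennreal (if i < m then W (i, c i) \<omega> powr s else W (i, c i) \<omega>)) \<in> borel_measurable M"
    by measurable
qed

lemma block_exp:
  assumes mn: "m \<le> n" and j: "j < 2^m" and s: "0 < s" "s \<le> 1"
  shows "(\<integral>\<^sup>+\<omega>. ennreal ((\<Sum>K\<in>{j*2^(n-m)..<(j+1)*2^(n-m)}. (\<Prod>i<n. W (i, K div 2^(n-i)) \<omega>) / 2^n) powr s) \<partial>M)
     \<le> ennreal ((1/2^m) powr s * (\<integral>\<omega>. W0 \<omega> powr s \<partial>M) ^ m)"
proof -
  define q :: nat where "q = 2^(n-m)"
  define B where "B = {j*q..<(j+1)*q}"
  define h :: real where "h = 1/2^m"
  define Es where "Es = (\<integral>\<omega>. W0 \<omega> powr s \<partial>M)"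
  define G where "G i t = (if i < m then t powr s else t)" for i and t :: real
  define c0 where "c0 i = j div 2^(m-i)" for i
  have h0: "h > 0" by (simp add: h_def)
  have q0: "q > 0" by (simp add: q_def)
  have nq: "(2::nat)^n = 2^m * q" using mn by (simp add: q_def power_add[symmetric])
  have Bn: "K < 2^n" if "K \<in> B" for K
  proof -
    have "K < (j+1)*q" using that by (simp add: B_def)
    also have "\<dots> \<le> 2^m * q" using j by (intro mult_right_mono) auto
    finally show ?thesis using nq by simp
  qed
  have Bdiv: "K div 2^(n-i) = c0 i" if "K \<in> B" "i \<le> m" for K i
  proof -
    have "K div q = j" using that(1) q0 unfolding B_def
      by (auto intro!: div_nat_eqI simp: algebra_simps)
    have "(2::nat)^(n-i) = q * 2^(m-i)" using that(2) mn by (simp add: q_def power_add[symmetric])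
    then have "K div 2^(n-i) = (K div q) div 2^(m-i)" by (simp add: div_mult2_eq)
    then show ?thesis using \<open>K div q = j\<close> by (simp add: c0_def)
  qed
  have c0lt: "c0 i < 2^i" if "i < m" for i using j that by (simp add: c0_def div_lt_pow)
  have Klt: "K div 2^(n-i) < 2^i" if "K \<in> B" "i < n" for K i
    using Bn[OF that(1)] that(2) by (simp add: div_lt_pow)
  define R where "R \<omega> = ennreal ((1-s) * h powr s) * (\<Prod>i<m. ennreal (G i (W (i, c0 i) \<omega>)))
     + ennreal (s * h powr (s-1) / 2^n) * (\<Sum>K\<in>B. \<Prod>i<n. ennreal (G i (W (i, K div 2^(n-i)) \<omega>)))" for \<omega>
  have pt: "ennreal ((\<Sum>K\<in>B. (\<Prod>i<n. W (i, K div 2^(n-i)) \<omega>) / 2^n) powr s) \<le> R \<omega>"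
    if wp: "\<forall>n k. k < 2^n \<longrightarrow> W (n,k) \<omega> > 0" for \<omega>
  proof -
    define w where "w p = W p \<omega>" for p
    define X where "X = (\<Prod>i<m. w (i, c0 i))"
    define Y where "Y K = (\<Prod>i\<in>{m..<n}. w (i, K div 2^(n-i)))" for K
    define Ys where "Ys = (\<Sum>K\<in>B. Y K / 2^n)"
    have wpos: "k < 2^i \<Longrightarrow> w (i, k) > 0" for i k using wp by (simp add: w_def)
    have X0: "X > 0" unfolding X_def using c0lt wpos by (intro prod_pos) auto
    have Y0: "Y K > 0" if "K \<in> B" for K unfolding Y_def using Klt[OF that] wpos
      by (intro prod_pos) auto
    have Ys0: "Ys \<ge> 0" unfolding Ys_def using Y0 by (intro sum_nonneg) (auto intro: less_imp_le)
    have split: "{..<n} = {..<m} \<union> {m..<n}" using mn by auto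
    have PK: "(\<Prod>i<n. w (i, K div 2^(n-i))) = X * Y K" if "K \<in> B" for K
    proof -
      have "(\<Prod>i<n. w (i, K div 2^(n-i))) = (\<Prod>i<m. w (i, K div 2^(n-i))) * Y K"
        unfolding Y_def by (subst split, subst prod.union_disjoint) auto
      also have "(\<Prod>i<m. w (i, K div 2^(n-i))) = X"
        unfolding X_def using Bdiv[OF that] by (intro prod.cong) auto
      finally show ?thesis .
    qed
    have GK: "(\<Prod>i<n. G i (w (i, K div 2^(n-i)))) = X powr s * Y K" if "K \<in> B" for K
    proof -
      have "(\<Prod>i<n. G i (w (i, K div 2^(n-i)))) = (\<Prod>i<m. G i (w (i, K div 2^(n-i)))) * (\<Prod>i\<in>{m..<n}. G i (w (i, K div 2^(n-i))))"
        by (subst split, subst prod.union_disjoint) auto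
      also have "(\<Prod>i<m. G i (w (i, K div 2^(n-i)))) = X powr s"
        unfolding X_def prod_powr_distrib using Bdiv[OF that] by (intro prod.cong) (auto simp: G_def)
      also have "(\<Prod>i\<in>{m..<n}. G i (w (i, K div 2^(n-i)))) = Y K"
        unfolding Y_def by (intro prod.cong) (auto simp: G_def)
      finally show ?thesis .
    qed
    have A: "(\<Sum>K\<in>B. (\<Prod>i<n. w (i, K div 2^(n-i))) / 2^n) = X * Ys"
      unfolding Ys_def by (simp add: sum_distrib_left PK)
    have Ysb: "Ys powr s \<le> h powr s * (1 - s + s * (Ys / h))"
    proof -
      have "Ys powr s = (h * (Ys / h)) powr s" using h0 by simp
      also have "\<dots> = h powr s * (Ys / h) powr s" by (rule powr_mult)
      also have "\<dots> \<le> h powr s * (1 - s + s * (Ys / h))"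
        using h0 Ys0 s by (intro mult_left_mono powr_tangent) auto
      finally show ?thesis .
    qed
    have "(X * Ys) powr s = X powr s * Ys powr s" by (simp add: powr_mult)
    also have "\<dots> \<le> X powr s * (h powr s * (1 - s + s * (Ys / h)))"
      using Ysb by (intro mult_left_mono) auto
    also have "\<dots> = (1-s) * h powr s * X powr s + s * (h powr s / h) * (X powr s * Ys)"
      by (simp add: algebra_simps)
    also have "h powr s / h = h powr (s-1)" using h0 by (simp add: powr_diff)
    also have "X powr s * Ys = (\<Sum>K\<in>B. (X powr s * Y K)) / 2^n"
      unfolding Ys_def by (simp add: sum_distrib_left sum_divide_distrib)
    also have "\<dots> = (\<Sum>K\<in>B. \<Prod>i<n. G i (w (i, K div 2^(n-i)))) / 2^n"
      using GK by simp
    finally have ineq: "(X * Ys) powr s \<le> (1-s) * h powr s * X powr s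
        + s * h powr (s-1) / 2^n * (\<Sum>K\<in>B. \<Prod>i<n. G i (w (i, K div 2^(n-i))))" by simp
    have Gnn: "0 \<le> G i (w (i, K div 2^(n-i)))" if "K \<in> B" "i < n" for K i
      using wpos[OF Klt[OF that]] by (auto simp: G_def)
    have "ennreal ((\<Sum>K\<in>B. (\<Prod>i<n. W (i, K div 2^(n-i)) \<omega>) / 2^n) powr s) = ennreal ((X * Ys) powr s)"
      using A by (simp add: w_def)
    also have "\<dots> \<le> ennreal ((1-s) * h powr s * X powr s
        + s * h powr (s-1) / 2^n * (\<Sum>K\<in>B. \<Prod>i<n. G i (w (i, K div 2^(n-i)))))"
      using ineq by (rule ennreal_leI)
    also have "\<dots> = R \<omega>"
    proof -
      have 1: "0 \<le> (1-s) * h powr s" using s by simp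
      have 2: "0 \<le> s * h powr (s-1) / 2^n" using s by simp
      have 3: "0 \<le> X powr s" by simp
      have 4: "0 \<le> (\<Sum>K\<in>B. \<Prod>i<n. G i (w (i, K div 2^(n-i))))"
        using Gnn by (intro sum_nonneg prod_nonneg) auto
      have 5: "ennreal (X powr s) = (\<Prod>i<m. ennreal (G i (W (i, c0 i) \<omega>)))"
        unfolding X_def prod_powr_distrib by (subst prod_ennreal) (auto simp: G_def w_def)
      have 6: "ennreal (\<Sum>K\<in>B. \<Prod>i<n. G i (w (i, K div 2^(n-i))))
           = (\<Sum>K\<in>B. \<Prod>i<n. ennreal (G i (W (i, K div 2^(n-i)) \<omega>)))"
        using Gnn by (subst sum_ennreal[symmetric]) (auto intro!: sum.cong prod_nonneg prod_ennreal[symmetric] simp: w_def)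
      show ?thesis unfolding R_def 5[symmetric] 6[symmetric]
        using 1 2 3 4 by (subst ennreal_lin) auto
    qed
    finally show ?thesis by (simp add: B_def)
  qed
  have Es0: "Es \<ge> 0" unfolding Es_def by (simp add: integral_nonneg)
  have card: "card B = q" by (simp add: B_def algebra_simps)
  have m1: "(\<lambda>\<omega>. \<Prod>i<m. ennreal (G i (W (i, c0 i) \<omega>))) \<in> borel_measurable M"
    using meas_prod[of m c0 m s] c0lt by (simp add: G_def)
  have m2: "(\<lambda>\<omega>. \<Prod>i<n. ennreal (G i (W (i, K div 2^(n-i)) \<omega>))) \<in> borel_measurable M" if "K \<in> B" for K
    using meas_prod[of n "\<lambda>i. K div 2^(n-i)" m s] Klt[OF that] by (simp add: G_def)
  have i1: "(\<integral>\<^sup>+\<omega>. (\<Prod>i<m. ennreal (G i (W (i, c0 i) \<omega>))) \<partial>M) = ennreal Es ^ m"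
    using prod_nn_m[of m c0 m s] c0lt s by (simp add: G_def Es_def)
  have i2: "(\<integral>\<^sup>+\<omega>. (\<Prod>i<n. ennreal (G i (W (i, K div 2^(n-i)) \<omega>))) \<partial>M) = ennreal Es ^ m" if "K \<in> B" for K
    using prod_nn_m[of n "\<lambda>i. K div 2^(n-i)" m s] Klt[OF that] s mn by (simp add: G_def Es_def)
  have "(\<integral>\<^sup>+\<omega>. ennreal ((\<Sum>K\<in>{j*2^(n-m)..<(j+1)*2^(n-m)}. (\<Prod>i<n. W (i, K div 2^(n-i)) \<omega>) / 2^n) powr s) \<partial>M)
     \<le> (\<integral>\<^sup>+\<omega>. R \<omega> \<partial>M)"
    by (intro nn_integral_mono_AE eventually_mono[OF Wpos]) (use pt in \<open>simp add: B_def q_def\<close>)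
  also have "\<dots> = ennreal ((1-s) * h powr s) * (\<integral>\<^sup>+\<omega>. (\<Prod>i<m. ennreal (G i (W (i, c0 i) \<omega>))) \<partial>M)
     + ennreal (s * h powr (s-1) / 2^n) * (\<Sum>K\<in>B. (\<integral>\<^sup>+\<omega>. (\<Prod>i<n. ennreal (G i (W (i, K div 2^(n-i)) \<omega>))) \<partial>M))"
    unfolding R_def using m1 m2
    by (subst nn_integral_add, measurable, subst nn_integral_cmult, measurable, subst nn_integral_cmult, measurable,
        subst nn_integral_sum) auto
  also have "\<dots> = ennreal ((1-s) * h powr s) * ennreal (Es ^ m) + ennreal (s * h powr (s-1) / 2^n) * ennreal (real q * Es ^ m)"
    using i1 i2 card Es0 by (simp add: ennreal_power ennreal_mult' ennreal_of_nat_eq_real_of_nat)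
  also have "\<dots> = ennreal ((1-s) * h powr s * (Es ^ m) + s * h powr (s-1) / 2^n * (real q * Es ^ m))"
    using s Es0 by (intro ennreal_lin[symmetric]) auto
  also have "(1-s) * h powr s * (Es ^ m) + s * h powr (s-1) / 2^n * (real q * Es ^ m) = h powr s * Es ^ m"
  proof -
    have "(2::real)^n = real q * 2^m" using nq
      by (metis of_nat_mult of_nat_numeral of_nat_power mult.commute)
    then have "real q / 2^n = h" unfolding h_def using q0 by (simp add: field_simps)
    then have "h powr (s-1) / 2^n * real q = h powr (s-1) * h" by (simp add: field_simps)
    also have "\<dots> = h powr s" using h0 by (simp add: powr_diff)
    finally have "h powr (s-1) / 2^n * real q = h powr s" .
    then have "s * h powr (s-1) / 2^n * (real q * Es ^ m) = s * h powr s * Es ^ m"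
      by (metis (no_types, lifting) mult.assoc times_divide_eq_left mult.commute)
    then show ?thesis by (simp add: algebra_simps)
  qed
  finally show ?thesis by (simp add: h_def Es_def)
qed
end



lemma exp_tangent: "exp (c::real) * (1 + u - c) \<le> exp u"
proof -
  have "exp c * (1 + (u - c)) \<le> exp c * exp (u - c)" by (intro mult_left_mono) auto
  then show ?thesis by (simp add: exp_diff algebra_simps)
qed

context casc begin

lemma Es_le1:
  assumes s: "0 < s" "s \<le> 1"
  shows "(\<integral>\<omega>. W0 \<omega> powr s \<partial>M) \<le> 1"
proof -
  have "(\<integral>\<omega>. W0 \<omega> powr s \<partial>M) \<le> (\<integral>\<omega>. 1 - s + s * W0 \<omega> \<partial>M)"
    using W0s_int[OF s] W0int
    by (intro integral_mono_AE eventually_mono[OF W0pos] powr_tangent) (use s in auto)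
  also have "\<dots> = 1" using W0int W0E by (simp add: prob_space)
  finally show ?thesis .
qed

lemma Es_ge:
  assumes s: "0 < s" "s \<le> 1"
    and Li: "integrable M (\<lambda>\<omega>. W0 \<omega> * log 2 (W0 \<omega>))"
    and La: "(\<integral>\<omega>. W0 \<omega> * log 2 (W0 \<omega>) \<partial>M) < 1"
  shows "2 powr (s - 1) \<le> (\<integral>\<omega>. W0 \<omega> powr s \<partial>M)"
proof -
  define a where "a = (\<integral>\<omega>. W0 \<omega> * log 2 (W0 \<omega>) \<partial>M)"
  define c where "c = (s - 1) * ln 2 * a"
  define k where "k = (s - 1) * ln 2"
  have pt: "exp c * (t + k * (t * log 2 t) - c * t) \<le> t powr s" if t: "t > 0" for t
  proof -
    have l: "ln 2 * log 2 t = ln t" by (simp add: log_def)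
    have e: "k * (t * log 2 t) = t * ((s-1) * ln t)" unfolding k_def
      by (simp add: algebra_simps flip: l)
    have "exp c * (t + k * (t * log 2 t) - c * t) = t * (exp c * (1 + (s-1) * ln t - c))"
      unfolding e by (simp add: algebra_simps)
    also have "\<dots> \<le> t * exp ((s-1) * ln t)" using t by (intro mult_left_mono exp_tangent) auto
    also have "\<dots> = exp (ln t) * exp ((s-1) * ln t)" using t by simp
    also have "\<dots> = exp (ln t + (s-1) * ln t)" by (simp only: exp_add)
    also have "ln t + (s-1) * ln t = s * ln t" by (simp add: algebra_simps)
    also have "exp (s * ln t) = t powr s" using t by (simp add: powr_def)
    finally show ?thesis .
  qed
  have "(\<integral>\<omega>. exp c * (W0 \<omega> + k * (W0 \<omega> * log 2 (W0 \<omega>)) - c * W0 \<omega>) \<partial>M) \<le> (\<integral>\<omega>. W0 \<omega> powr s \<partial>M)"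
    using W0s_int[OF s] W0int Li
    by (intro integral_mono_AE eventually_mono[OF W0pos] pt) auto
  moreover have "(\<integral>\<omega>. exp c * (W0 \<omega> + k * (W0 \<omega> * log 2 (W0 \<omega>)) - c * W0 \<omega>) \<partial>M) = exp c"
  proof -
    have "(\<integral>\<omega>. exp c * (W0 \<omega> + k * (W0 \<omega> * log 2 (W0 \<omega>)) - c * W0 \<omega>) \<partial>M)
        = exp c * ((\<integral>\<omega>. W0 \<omega> \<partial>M) + k * a - c * (\<integral>\<omega>. W0 \<omega> \<partial>M))"
      using W0int Li unfolding a_def by simp
    also have "\<dots> = exp c" using W0E by (simp add: c_def k_def)
    finally show ?thesis .
  qed
  moreover have "2 powr (s - 1) \<le> exp c"
  proof -
    have "s - 1 \<le> (s - 1) * a" using s La unfolding a_def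
      by (smt (verit) mult_le_cancel_left1)
    then have "2 powr (s - 1) \<le> 2 powr ((s - 1) * a)" by simp
    also have "\<dots> = exp c" by (simp add: powr_def c_def algebra_simps)
    finally show ?thesis .
  qed
  ultimately show ?thesis by linarith
qed

end



definition blk :: "(nat \<times> nat \<Rightarrow> 'a \<Rightarrow> real) \<Rightarrow> nat \<Rightarrow> nat \<Rightarrow> nat \<Rightarrow> 'a \<Rightarrow> real" where
  "blk W m n j \<omega> = (\<Sum>K\<in>{j*2^(n-m)..<(j+1)*2^(n-m)}. (\<Prod>i<n. W (i, K div 2^(n-i)) \<omega>) / 2^n)"

lemma dyadic_index_meas: "dyadic_index j \<in> measurable borel (count_space UNIV)"
  unfolding dyadic_index_def[abs_def] by measurable

lemma cw_meas: "(\<lambda>t. cascade_weight W n \<omega> t) \<in> borel_measurable borel"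
  unfolding cascade_weight_def
proof (rule borel_measurable_prod)
  fix j assume "j \<in> {..<n}"
  show "(\<lambda>t. W (j, dyadic_index j t) \<omega>) \<in> borel_measurable borel"
    by (rule measurable_compose_countable[where f = "\<lambda>k t. W (j, k) \<omega>", OF _ dyadic_index_meas]) auto
qed

lemma sum_regroup:
  fixes g :: "nat \<Rightarrow> 'b::comm_monoid_add"
  assumes "a \<le> b"
  shows "(\<Sum>K\<in>{a*q..<b*q}. g K) = (\<Sum>j\<in>{a..<b}. \<Sum>K\<in>{j*q..<(j+1)*q}. g K)"
  using assms
proof (induction b)
  case 0 then show ?case by simp
next
  case (Suc b)
  show ?case
  proof (cases "a = Suc b")
    case True then show ?thesis by simp
  next
    case False
    then have ab: "a \<le> b" using Suc by simp
    have "(\<Sum>K\<in>{a*q..<(b+1)*q}. g K) = (\<Sum>K\<in>{a*q..<b*q}. g K) + (\<Sum>K\<in>{b*q..<(b+1)*q}. g K)"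
      by (rule sum.atLeastLessThan_concat[symmetric]) (use ab in \<open>auto intro: mult_right_mono\<close>)
    then show ?thesis using Suc.IH[OF ab] ab by simp
  qed
qed

lemma density_bound:
  fixes f :: "real \<Rightarrow> real" and W :: "nat \<times> nat \<Rightarrow> 'a \<Rightarrow> real"
  assumes mn: "m \<le> n" and ab: "\<alpha> \<le> \<beta>" 
    and f1: "\<And>t. f t \<le> 1" and fsupp: "\<And>t. t \<in> {0..1} \<Longrightarrow> f t \<noteq> 0 \<Longrightarrow> t \<in> {real \<alpha> / 2^m .. real \<beta> / 2^m}"
    and b2: "\<beta> \<le> 2^m" and Wnn: "\<And>i k. k < 2^i \<Longrightarrow> 0 \<le> W (i, k) \<omega>"
  shows "(\<integral>\<^sup>+t. indicator {0..1} t * ennreal (cascade_weight W n \<omega> t) * ennreal (f t) \<partial>lborel)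
     \<le> ennreal (\<Sum>j\<in>{\<alpha>..<\<beta>}. blk W m n j \<omega>)"
proof -
  define q :: nat where "q = 2^(n-m)"
  have nq: "(2::real)^n = 2^m * real q" using mn
    by (simp add: q_def power_add[symmetric])
  have e: "real (c * q) / 2^n = real c / 2^m" for c using nq by (simp add: q_def field_simps)
  have "(\<integral>\<^sup>+t. indicator {0..1} t * ennreal (cascade_weight W n \<omega> t) * ennreal (f t) \<partial>lborel)
     \<le> (\<integral>\<^sup>+t. indicator {real (\<alpha>*q) / 2^n .. real (\<beta>*q) / 2^n} t *
            ennreal (\<Prod>i<n. W (i, dyadic_index i t) \<omega>) \<partial>lborel)"
  proof (intro nn_integral_mono)
    fix t
    show "indicator {0..1} t * ennreal (cascade_weight W n \<omega> t) * ennreal (f t)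
       \<le> indicator {real (\<alpha>*q) / 2^n .. real (\<beta>*q) / 2^n} t * ennreal (\<Prod>i<n. W (i, dyadic_index i t) \<omega>)"
    proof (cases "t \<in> {0..1} \<and> f t \<noteq> 0")
      case True
      then have "t \<in> {real (\<alpha>*q) / 2^n .. real (\<beta>*q) / 2^n}" using fsupp e by auto
      moreover have "ennreal (f t) \<le> 1" using f1[of t] by (simp add: ennreal_le_1)
      ultimately show ?thesis using True
        by (auto simp: cascade_weight_def intro: mult_left_le)
    next
      case False then show ?thesis by auto
    qed
  qed
  also have "\<dots> \<le> (\<Sum>K\<in>{\<alpha>*q..<\<beta>*q}. ennreal ((\<Prod>i<n. W (i, K div 2^(n-i)) \<omega>) / 2^n))"
    using ab by (intro step_integral_le) (auto intro: mult_right_mono)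
  also have "\<dots> = (\<Sum>j\<in>{\<alpha>..<\<beta>}. \<Sum>K\<in>{j*q..<(j+1)*q}. ennreal ((\<Prod>i<n. W (i, K div 2^(n-i)) \<omega>) / 2^n))"
    using ab by (rule sum_regroup)
  also have "\<dots> = ennreal (\<Sum>j\<in>{\<alpha>..<\<beta>}. blk W m n j \<omega>)"
  proof -
    have nn: "0 \<le> (\<Prod>i<n. W (i, K div 2^(n-i)) \<omega>) / 2^n" if "j < \<beta>" "K \<in> {j*q..<(j+1)*q}" for j K
    proof -
      have "K < (j+1)*q" using that by simp
      also have "\<dots> \<le> 2^m * q" using that b2 by (intro mult_right_mono) auto
      also have "\<dots> = 2^n" using mn by (simp add: q_def power_add[symmetric])
      finally have "K < 2^n" .
      then show ?thesis by (intro divide_nonneg_nonneg prod_nonneg Wnn div_lt_pow) auto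
    qed
    have e1: "(\<Sum>K\<in>{j*q..<(j+1)*q}. ennreal ((\<Prod>i<n. W (i, K div 2^(n-i)) \<omega>) / 2^n)) = ennreal (blk W m n j \<omega>)" if "j < \<beta>" for j
      unfolding blk_def q_def[symmetric] using nn[OF that] by (intro sum_ennreal) auto
    have e2: "0 \<le> blk W m n j \<omega>" if "j < \<beta>" for j
      unfolding blk_def q_def[symmetric] using nn[OF that] by (intro sum_nonneg) auto
    have "(\<Sum>j\<in>{\<alpha>..<\<beta>}. \<Sum>K\<in>{j*q..<(j+1)*q}. ennreal ((\<Prod>i<n. W (i, K div 2^(n-i)) \<omega>) / 2^n))
        = (\<Sum>j\<in>{\<alpha>..<\<beta>}. ennreal (blk W m n j \<omega>))"
      by (intro sum.cong refl e1) auto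
    also have "\<dots> = ennreal (\<Sum>j\<in>{\<alpha>..<\<beta>}. blk W m n j \<omega>)"
      by (rule sum_ennreal) (auto intro: e2)
    finally show ?thesis .
  qed
  finally show ?thesis .
qed




lemma pointwise:
  fixes W :: "nat \<times> nat \<Rightarrow> 'a \<Rightarrow> real" and \<nu> :: "real measure"
  assumes wc: "weak_conv_measures (\<lambda>n. cascade_measure W n \<omega>) \<nu>"
    and Wnn: "\<And>i k. k < 2^i \<Longrightarrow> 0 \<le> W (i, k) \<omega>"
    and ab: "a \<le> b" and \<alpha>\<beta>: "\<alpha> \<le> \<beta>" "\<beta> \<le> 2^m"
    and LR: "L < a" "b < R" and cover: "\<And>t. t \<in> {0..1} \<Longrightarrow> t \<in> {L..R} \<Longrightarrow> t \<in> {real \<alpha> / 2^m .. real \<beta> / 2^m}"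
    and s: "0 < s" "s \<le> 1"
  shows "ennreal (measure \<nu> {a..b} powr s)
     \<le> liminf (\<lambda>n. ennreal (\<Sum>j\<in>{\<alpha>..<\<beta>}. blk W m (n+m) j \<omega> powr s))"
proof -
  define \<delta> where "\<delta> = min (a - L) (R - b)"
  have \<delta>: "\<delta> > 0" using LR by (simp add: \<delta>_def)
  define f where "f t = max 0 (min 1 (min ((t - L) / \<delta>) ((R - t) / \<delta>)))" for t
  have fc: "continuous_on UNIV f" unfolding f_def using \<delta> by (intro continuous_intros) auto
  have f01: "0 \<le> f t" "f t \<le> 1" for t by (auto simp: f_def)
  have fbd: "bounded (range f)"
    by (rule bounded_subset[of "{0..1}"]) (auto simp: f01)
  have fab: "f t = 1" if "t \<in> {a..b}" for t
  proof -
    have d: "\<delta> \<le> a - L" "\<delta> \<le> R - b" by (auto simp: \<delta>_def)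
    have "1 \<le> (t - L) / \<delta>" using that \<delta> d by (subst le_divide_eq_1_pos) auto
    moreover have "1 \<le> (R - t) / \<delta>" using that \<delta> d by (subst le_divide_eq_1_pos) auto
    ultimately show ?thesis by (simp add: f_def)
  qed
  have fsupp: "t \<in> {L..R}" if "f t \<noteq> 0" for t
  proof (rule ccontr)
    assume "t \<notin> {L..R}"
    then have "(t - L) / \<delta> < 0 \<or> (R - t) / \<delta> < 0" using \<delta> by (auto simp: divide_less_0_iff)
    then show False using that by (auto simp: f_def)
  qed
  have fm: "f \<in> borel_measurable borel" by (rule borel_measurable_continuous_onI[OF fc])
  from wc have sets\<nu>: "sets \<nu> = sets borel" and fin: "finite_measure \<nu>"
    and lim: "(\<lambda>n. \<integral>x. f x \<partial>cascade_measure W n \<omega>) \<longlonglongrightarrow> (\<integral>x. f x \<partial>\<nu>)"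
    using fc fbd unfolding weak_conv_measures_def by auto
  interpret \<nu>: finite_measure \<nu> by (rule fin)
  have fm\<nu>: "f \<in> borel_measurable \<nu>" using fm unfolding measurable_cong_sets[OF sets\<nu> refl] .
  define c where "c = measure \<nu> {a..b}"
  define Lf where "Lf = (\<integral>x. f x \<partial>\<nu>)"
  have c0: "0 \<le> c" by (simp add: c_def)
  have cLf: "c \<le> Lf"
  proof -
    have "emeasure \<nu> {a..b} = (\<integral>\<^sup>+x. indicator {a..b} x \<partial>\<nu>)"
      using sets\<nu> by simp
    also have "\<dots> \<le> (\<integral>\<^sup>+x. ennreal (f x) \<partial>\<nu>)"
      by (intro nn_integral_mono) (auto simp: fab indicator_def)
    finally have 1: "emeasure \<nu> {a..b} \<le> (\<integral>\<^sup>+x. ennreal (f x) \<partial>\<nu>)" .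
    have "(\<integral>\<^sup>+x. ennreal (f x) \<partial>\<nu>) \<le> (\<integral>\<^sup>+x. 1 \<partial>\<nu>)"
      using f01 by (intro nn_integral_mono) (simp add: ennreal_le_1)
    also have "\<dots> < top" by (simp add: \<nu>.emeasure_finite less_top[symmetric])
    finally have 2: "(\<integral>\<^sup>+x. ennreal (f x) \<partial>\<nu>) < top" .
    have "c = enn2real (emeasure \<nu> {a..b})" by (simp add: c_def measure_def)
    also have "\<dots> \<le> enn2real (\<integral>\<^sup>+x. ennreal (f x) \<partial>\<nu>)" using 1 2 by (rule enn2real_mono)
    also have "\<dots> = Lf" unfolding Lf_def using fm\<nu> f01 by (subst integral_eq_nn_integral) auto
    finally show ?thesis .
  qed
  define F where "F n = (\<integral>x. f x \<partial>cascade_measure W n \<omega>)" for n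
  define S where "S n = (\<Sum>j\<in>{\<alpha>..<\<beta>}. blk W m n j \<omega>)" for n
  have blk0: "0 \<le> blk W m n j \<omega>" if jb: "j < \<beta>" and mn: "m \<le> n" for n j
  proof -
    have "0 \<le> (\<Prod>i<n. W (i, K div 2^(n-i)) \<omega>) / 2^n" if "K \<in> {j*2^(n-m)..<(j+1)*2^(n-m)}" for K
    proof -
      have "K < (j+1)*2^(n-m)" using that by simp
      also have "\<dots> \<le> 2^m * 2^(n-m)" using jb \<alpha>\<beta> by (intro mult_right_mono) auto
      also have "\<dots> = 2^n" using mn by (simp add: power_add[symmetric])
      finally have "K < 2^n" .
      then show ?thesis by (intro divide_nonneg_nonneg prod_nonneg Wnn div_lt_pow) auto
    qed
    then show ?thesis unfolding blk_def by (intro sum_nonneg) auto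
  qed
  have F0: "0 \<le> F n" for n unfolding F_def using f01 by (intro integral_nonneg_AE) auto
  have FS: "F n \<le> S n" if "m \<le> n" for n
  proof -
    have cwm: "(\<lambda>t. indicator {0..1} t * ennreal (cascade_weight W n \<omega> t)) \<in> borel_measurable lborel"
      using cw_meas[of W n \<omega>] by measurable
    have sets: "sets (cascade_measure W n \<omega>) = sets borel" by (simp add: cascade_measure_def)
    have fmc: "f \<in> borel_measurable (cascade_measure W n \<omega>)"
      using fm unfolding measurable_cong_sets[OF sets refl] .
    have "(\<integral>\<^sup>+x. ennreal (f x) \<partial>cascade_measure W n \<omega>)
        = (\<integral>\<^sup>+t. indicator {0..1} t * ennreal (cascade_weight W n \<omega> t) * ennreal (f t) \<partial>lborel)"
      unfolding cascade_measure_def using cwm fm by (subst nn_integral_density) auto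
    also have "\<dots> \<le> ennreal (S n)" unfolding S_def
      using that \<alpha>\<beta> f01 cover fsupp Wnn by (intro density_bound) auto
    finally have le: "(\<integral>\<^sup>+x. ennreal (f x) \<partial>cascade_measure W n \<omega>) \<le> ennreal (S n)" .
    have S0: "0 \<le> S n" unfolding S_def using blk0 that by (intro sum_nonneg) auto
    have "F n = enn2real (\<integral>\<^sup>+x. ennreal (f x) \<partial>cascade_measure W n \<omega>)"
      unfolding F_def using fmc f01 by (subst integral_eq_nn_integral) auto
    also have "\<dots> \<le> enn2real (ennreal (S n))" using le by (rule enn2real_mono) simp
    finally show ?thesis using S0 by simp
  qed
  show ?thesis
  proof (cases "c = 0")
    case True then show ?thesis by (simp add: c_def[symmetric])
  next
    case False
    then have Lf0: "Lf \<noteq> 0" using c0 cLf by auto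
    have lim': "(\<lambda>n. F (n+m)) \<longlonglongrightarrow> Lf"
      using LIMSEQ_ignore_initial_segment[OF lim, of m] unfolding F_def Lf_def .
    have "(\<lambda>n. ennreal (F (n+m) powr s)) \<longlonglongrightarrow> ennreal (Lf powr s)"
      using lim' Lf0 by (intro tendsto_ennrealI tendsto_powr) auto
    then have eq: "liminf (\<lambda>n. ennreal (F (n+m) powr s)) = ennreal (Lf powr s)"
      by (intro lim_imp_Liminf) auto
    have X: "ennreal (c powr s) \<le> ennreal (Lf powr s)"
      using c0 cLf s by (intro ennreal_leI powr_mono2) auto
    have Y: "liminf (\<lambda>n. ennreal (F (n+m) powr s)) \<le> liminf (\<lambda>n. ennreal (\<Sum>j\<in>{\<alpha>..<\<beta>}. blk W m (n+m) j \<omega> powr s))"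
    proof (intro Liminf_mono eventually_sequentiallyI[of 0])
      fix n0 :: nat define n where "n = n0 + m"
      have n: "m \<le> n" by (simp add: n_def)
      have "F n powr s \<le> S n powr s" using FS[OF n] F0 s by (intro powr_mono2) auto
      also have "\<dots> \<le> (\<Sum>j\<in>{\<alpha>..<\<beta>}. blk W m n j \<omega> powr s)"
        unfolding S_def using blk0 n s by (intro powr_subadd_sum) auto
      finally show "ennreal (F (n0+m) powr s) \<le> ennreal (\<Sum>j\<in>{\<alpha>..<\<beta>}. blk W m (n0+m) j \<omega> powr s)"
        unfolding n_def by (rule ennreal_leI)
    qed
    have "ennreal (c powr s) \<le> liminf (\<lambda>n. ennreal (\<Sum>j\<in>{\<alpha>..<\<beta>}. blk W m (n+m) j \<omega> powr s))"
      using X Y unfolding eq by (rule order_trans)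
    then show ?thesis by (simp add: c_def)
  qed
qed




context casc begin

lemma blk_meas:
  assumes "m \<le> n" "j < 2^m"
  shows "(\<lambda>\<omega>. blk W m n j \<omega>) \<in> borel_measurable M"
  unfolding blk_def
proof (intro borel_measurable_sum borel_measurable_divide borel_measurable_prod borel_measurable_const)
  fix K i assume K: "K \<in> {j*2^(n-m)..<(j+1)*2^(n-m)}" and i: "i \<in> {..<n}"
  have "K < (j+1)*2^(n-m)" using K by simp
  also have "\<dots> \<le> 2^m * 2^(n-m)" using assms by (intro mult_right_mono) auto
  also have "\<dots> = 2^n" using assms by (simp add: power_add[symmetric])
  finally have "K < 2^n" .
  then show "W (i, K div 2^(n-i)) \<in> borel_measurable M" using i by (intro Wm div_lt_pow) auto
qed

lemma key:
  fixes \<mu> :: "'a \<Rightarrow> real measure"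
  assumes wcAE: "AE \<omega> in M. weak_conv_measures (\<lambda>n. cascade_measure W n \<omega>) (\<mu> \<omega>)"
    and xy: "x \<in> {0..1}" "y \<in> {0..1}" and s: "0 < s" "s \<le> 1"
    and dm: "\<bar>x - y\<bar> \<le> 1/2^m"
  shows "(\<integral>\<^sup>+\<omega>. ennreal (measure (\<mu> \<omega>) {min x y..max x y} powr s) \<partial>M)
     \<le> 3 * ennreal ((1/2^m) powr s * (\<integral>\<omega>. W0 \<omega> powr s \<partial>M) ^ m)"
proof -
  define a where "a = min x y"
  define b where "b = max x y"
  have ab: "a \<le> b" "0 \<le> a" "b \<le> 1" "b \<le> a + 1/2^m" using xy dm by (auto simp: a_def b_def)
  define k where "k = nat \<lfloor>a * 2^m\<rfloor>"
  have k1: "real k \<le> a * 2^m" "a * 2^m < real k + 1" using ab by (auto simp: k_def)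
  define \<alpha> where "\<alpha> = k - 1"
  define \<beta> :: nat where "\<beta> = min (k+2) (2^m)"
  define L :: real where "L = (real k - 1) / 2^m"
  define R :: real where "R = (real k + 2) / 2^m"
  have kle: "k \<le> 2^m"
  proof -
    have "real k \<le> 2^m" using k1 ab by (smt (verit) mult_left_le_one_le zero_le_power)
    then show ?thesis by (metis of_nat_le_iff of_nat_numeral of_nat_power)
  qed
  have \<alpha>\<beta>: "\<alpha> \<le> \<beta>" "\<beta> \<le> 2^m" using kle by (auto simp: \<alpha>_def \<beta>_def)
  have LR: "L < a" "b < R"
  proof -
    show "L < a" using k1 by (simp add: L_def field_simps)
    have "b * 2^m \<le> a * 2^m + 1" using ab by (simp add: field_simps)
    then show "b < R" using k1 by (simp add: R_def field_simps)
  qed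
  have cover: "t \<in> {real \<alpha> / 2^m .. real \<beta> / 2^m}" if "t \<in> {0..1}" "t \<in> {L..R}" for t
  proof -
    have "real \<alpha> / 2^m \<le> t"
    proof (cases "k = 0")
      case True then show ?thesis using that by (simp add: \<alpha>_def)
    next
      case False then have "real \<alpha> = real k - 1" by (simp add: \<alpha>_def of_nat_diff)
      then show ?thesis using that by (simp add: L_def)
    qed
    moreover have "t \<le> real \<beta> / 2^m"
    proof (cases "k + 2 \<le> 2^m")
      case True then have "real \<beta> = real k + 2" by (simp add: \<beta>_def)
      then show ?thesis using that by (simp add: R_def)
    next
      case False then have "real \<beta> = 2^m" by (simp add: \<beta>_def)
      then show ?thesis using that by simp
    qed
    ultimately show ?thesis by simp
  qed
  have card: "card {\<alpha>..<\<beta>} \<le> 3" by (simp add: \<alpha>_def \<beta>_def)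
  define G where "G n \<omega> = ennreal (\<Sum>j\<in>{\<alpha>..<\<beta>}. blk W m (n+m) j \<omega> powr s)" for n \<omega>
  have bm: "(\<lambda>\<omega>. blk W m (n+m) j \<omega> powr s) \<in> borel_measurable M" if "j \<in> {\<alpha>..<\<beta>}" for n j
  proof -
    have "j < 2^m" using that \<alpha>\<beta> by auto
    then have "(\<lambda>\<omega>. blk W m (n+m) j \<omega>) \<in> borel_measurable M" by (intro blk_meas) auto
    then show ?thesis by (intro powr_real_measurable borel_measurable_const)
  qed
  have Gm: "G n \<in> borel_measurable M" for n
  proof -
    have "(\<lambda>\<omega>. \<Sum>j\<in>{\<alpha>..<\<beta>}. blk W m (n+m) j \<omega> powr s) \<in> borel_measurable M"
      by (rule borel_measurable_sum) (rule bm)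
    then show ?thesis unfolding G_def by (rule measurable_compose[OF _ measurable_ennreal])
  qed
  define Es where "Es = (\<integral>\<omega>. W0 \<omega> powr s \<partial>M)"
  have "(\<integral>\<^sup>+\<omega>. ennreal (measure (\<mu> \<omega>) {a..b} powr s) \<partial>M) \<le> (\<integral>\<^sup>+\<omega>. liminf (\<lambda>n. G n \<omega>) \<partial>M)"
  proof (intro nn_integral_mono_AE eventually_mono[OF AE_conjI[OF wcAE Wpos]])
    fix \<omega> assume h: "weak_conv_measures (\<lambda>n. cascade_measure W n \<omega>) (\<mu> \<omega>) \<and> (\<forall>n k. k < 2 ^ n \<longrightarrow> 0 < W (n, k) \<omega>)"
    show "ennreal (measure (\<mu> \<omega>) {a..b} powr s) \<le> liminf (\<lambda>n. G n \<omega>)"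
    proof -
      have Wnn: "\<And>i k. k < 2^i \<Longrightarrow> 0 \<le> W (i, k) \<omega>" using h by (simp add: less_imp_le)
      show ?thesis unfolding G_def
        by (rule pointwise[where L = L and R = R, OF conjunct1[OF h] Wnn ab(1) \<alpha>\<beta> LR cover s]) auto
    qed
  qed
  also have "\<dots> \<le> liminf (\<lambda>n. integral\<^sup>N M (G n))" by (rule nn_integral_liminf[OF Gm])
  also have "\<dots> \<le> 3 * ennreal ((1/2^m) powr s * Es ^ m)"
  proof (intro Liminf_le eventually_sequentiallyI[of 0])
    fix n :: nat
    have "integral\<^sup>N M (G n) = (\<integral>\<^sup>+\<omega>. (\<Sum>j\<in>{\<alpha>..<\<beta>}. ennreal (blk W m (n+m) j \<omega> powr s)) \<partial>M)"
      unfolding G_def by (intro nn_integral_cong) (simp add: sum_ennreal)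
    also have "\<dots> = (\<Sum>j\<in>{\<alpha>..<\<beta>}. \<integral>\<^sup>+\<omega>. ennreal (blk W m (n+m) j \<omega> powr s) \<partial>M)"
      by (intro nn_integral_sum measurable_compose[OF _ measurable_ennreal] bm) auto
    also have "\<dots> \<le> (\<Sum>j\<in>{\<alpha>..<\<beta>}. ennreal ((1/2^m) powr s * Es ^ m))"
      unfolding blk_def Es_def using \<alpha>\<beta> s by (intro sum_mono block_exp) auto
    also have "\<dots> = of_nat (card {\<alpha>..<\<beta>}) * ennreal ((1/2^m) powr s * Es ^ m)" by simp
    also have "\<dots> \<le> 3 * ennreal ((1/2^m) powr s * Es ^ m)"
    proof (rule mult_right_mono)
      have "real (card {\<alpha>..<\<beta>}) \<le> 3" using card by simp
      then show "of_nat (card {\<alpha>..<\<beta>}) \<le> (3::ennreal)"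
        by (metis ennreal_of_nat_eq_real_of_nat ennreal_leI ennreal_numeral)
    qed simp
    finally show "integral\<^sup>N M (G n) \<le> 3 * ennreal ((1/2^m) powr s * Es ^ m)" .
  qed simp
  finally show ?thesis by (simp add: a_def b_def Es_def)
qed

end



theorem lemma3p3:
  fixes M :: "'a measure"
    and W0 :: "'a \<Rightarrow> real"
    and W :: "nat \<times> nat \<Rightarrow> 'a \<Rightarrow> real"
    and \<mu> :: "'a \<Rightarrow> real measure"
    and x y s :: real
  assumes "prob_space M"
    and "W0 \<in> borel_measurable M"
    and "prob_space.indep_vars M (\<lambda>_. borel) W {(n, k). k < 2 ^ n}"
    and "\<And>n k. k < 2 ^ n \<Longrightarrow> distr M borel (W (n, k)) = distr M borel W0"
    and "AE \<omega> in M. W0 \<omega> > 0"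
    and "integrable M W0" and "(\<integral>\<omega>. W0 \<omega> \<partial>M) = 1"
    and "integrable M (\<lambda>\<omega>. W0 \<omega> * log 2 (W0 \<omega>))"
    and "(\<integral>\<omega>. W0 \<omega> * log 2 (W0 \<omega>) \<partial>M) < 1"
    and "AE \<omega> in M. weak_conv_measures (\<lambda>n. cascade_measure W n \<omega>) (\<mu> \<omega>)"
    and "x \<in> {0..1}" and "y \<in> {0..1}" and "s \<in> {0<..1}"
  shows "(\<integral>\<^sup>+\<omega>. ennreal (measure (\<mu> \<omega>) {min x y..max x y} powr s) \<partial>M)
           \<le> ennreal (8 * \<bar>x - y\<bar> powr (s - log 2 (\<integral>\<omega>. W0 \<omega> powr s \<partial>M)))"
proof -
  have C: "casc M W0 W" unfolding casc_def casc_axioms_def using assms(1-7) by auto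
  interpret casc M W0 W by (rule C)
  have s: "0 < s" "s \<le> 1" using assms(13) by auto
  define Es where "Es = (\<integral>\<omega>. W0 \<omega> powr s \<partial>M)"
  define \<phi> where "\<phi> = s - log 2 Es"
  define V where "V = (\<integral>\<^sup>+\<omega>. ennreal (measure (\<mu> \<omega>) {min x y..max x y} powr s) \<partial>M)"
  have Eg: "2 powr (s - 1) \<le> Es" unfolding Es_def using Es_ge[OF s assms(8,9)] .
  have El: "Es \<le> 1" unfolding Es_def using Es_le1[OF s] .
  have E0: "Es > 0" using Eg by (smt (verit) powr_gt_zero)
  have "log 2 (2 powr (s - 1)) \<le> log 2 Es" using Eg E0 by (subst log_le_cancel_iff) auto
  then have l1: "s - 1 \<le> log 2 Es" by simp
  have l2: "log 2 Es \<le> 0" using El E0 by simp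
  have \<phi>1: "\<phi> \<le> 1" "s \<le> \<phi>" using l1 l2 by (auto simp: \<phi>_def)
  have \<phi>0: "\<phi> > 0" using \<phi>1 s by simp
  have ident: "(1/2^m) powr s * Es ^ m = (1/2^m) powr \<phi>" for m :: nat
  proof -
    have h: "1/(2::real)^m = 2 powr (- real m)" by (simp add: powr_minus powr_realpow divide_inverse)
    have "Es ^ m = (2 powr (log 2 Es)) ^ m" using E0 by simp
    also have "\<dots> = 2 powr (log 2 Es * real m)" by (simp add: powr_powr[symmetric] powr_realpow)
    finally have e: "Es ^ m = 2 powr (log 2 Es * real m)" .
    have "(2 powr (- real m)) powr s * 2 powr (log 2 Es * real m) = 2 powr (- real m * s + log 2 Es * real m)"
      unfolding powr_powr powr_add[symmetric] by (simp add: algebra_simps)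
    also have "\<dots> = 2 powr (- real m * \<phi>)" by (simp add: \<phi>_def algebra_simps)
    also have "\<dots> = (2 powr (- real m)) powr \<phi>" by (simp add: powr_powr)
    finally show ?thesis unfolding h e .
  qed
  have key': "V \<le> 3 * ennreal ((1/2^m) powr \<phi>)" if "\<bar>x - y\<bar> \<le> 1/2^m" for m :: nat
  proof -
    have k: "V \<le> 3 * ennreal ((1/2^m) powr s * Es ^ m)"
      using key[OF assms(10,11,12) s that] unfolding V_def Es_def .
    show ?thesis using k by (simp only: ident)
  qed
  show ?thesis
  proof (cases "x = y")
    case True
    define q :: real where "q = 2 powr (-\<phi>)"
    have q: "0 \<le> q" "q < 1" using \<phi>0 unfolding q_def by (auto intro!: powr_less_one)
    have Vm: "V \<le> 3 * ennreal (q ^ m)" for m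
    proof -
      have h: "1/(2::real)^m = 2 powr (- real m)" by (simp add: powr_minus powr_realpow divide_inverse)
      have "q ^ m = q powr real m" using q powr_realpow[of q m] by (simp add: q_def)
      also have "\<dots> = 2 powr (- \<phi> * real m)" unfolding q_def powr_powr ..
      also have "\<dots> = (2 powr (- real m)) powr \<phi>" unfolding powr_powr by (simp add: algebra_simps)
      finally have "(1/2^m) powr \<phi> = q ^ m" unfolding h by simp
      then show ?thesis using key'[of m] True by simp
    qed
    have fin: "V \<noteq> top" using Vm[of 0] by (auto simp: top_unique ennreal_mult_eq_top_iff)
    have "enn2real V \<le> 3 * q ^ m" for m
    proof -
      have "enn2real V \<le> enn2real (3 * ennreal (q ^ m))"
        using Vm[of m] by (intro enn2real_mono) (auto simp: ennreal_mult_less_top)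
      also have "\<dots> = 3 * q ^ m" using q by (simp add: enn2real_mult)
      finally show ?thesis .
    qed
    moreover have "(\<lambda>m. 3 * q ^ m) \<longlonglongrightarrow> 0"
      using q by (intro tendsto_mult_right_zero LIMSEQ_power_zero) auto
    ultimately have "enn2real V \<le> 0" by (intro LIMSEQ_le_const[of "\<lambda>m. 3 * q ^ m"]) auto
    then have "V = 0" using fin by (metis enn2real_nonneg ennreal_enn2real_if order_antisym ennreal_0)
    then show ?thesis by (simp add: V_def[symmetric])
  next
    case False
    define d where "d = \<bar>x - y\<bar>"
    have d: "0 < d" "d \<le> 1" using False assms(11,12) by (auto simp: d_def)
    define l where "l = log 2 d"
    have l0: "l \<le> 0" using d by (simp add: l_def)
    define m where "m = nat \<lfloor>- l\<rfloor>"
    have m: "real m \<le> - l" "- l < real m + 1" using l0 by (auto simp: m_def)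
    have p: "2 powr (- l) = 1 / d" using d by (simp add: l_def powr_minus divide_inverse)
    have pm: "(2::real) ^ m = 2 powr real m" by (simp add: powr_realpow)
    have dm: "d \<le> 1/2^m"
    proof -
      have "2 powr real m \<le> 2 powr (- l)" using m by simp
      then have "2^m \<le> 1/d" using p pm by simp
      then show ?thesis using d by (simp add: field_simps)
    qed
    have dm2: "1/2^m < 2 * d"
    proof -
      have "2 powr (- l) < 2 powr (real m + 1)" using m by simp
      then have "1/d < 2^m * 2" using p pm by (simp add: powr_add)
      then show ?thesis using d by (simp add: field_simps)
    qed
    have "V \<le> 3 * ennreal ((1/2^m) powr \<phi>)" using key'[of m] dm by (simp add: d_def)
    also have "\<dots> \<le> 3 * ennreal ((2 * d) powr \<phi>)"
      using dm2 \<phi>0 by (intro mult_left_mono ennreal_leI powr_mono2) auto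
    also have "(2 * d) powr \<phi> = 2 powr \<phi> * d powr \<phi>" using d by (simp add: powr_mult)
    also have "3 * ennreal (2 powr \<phi> * d powr \<phi>) \<le> ennreal (8 * d powr \<phi>)"
    proof -
      have "2 powr \<phi> \<le> 2 powr 1" using \<phi>1 by (intro powr_mono) auto
      then have t: "2 powr \<phi> \<le> 2" by simp
      have D: "0 \<le> d powr \<phi>" by simp
      have "2 powr \<phi> * d powr \<phi> \<le> 2 * d powr \<phi>" using t D by (rule mult_right_mono)
      then have le: "3 * (2 powr \<phi> * d powr \<phi>) \<le> 8 * d powr \<phi>" using D by linarith
      have "3 * ennreal (2 powr \<phi> * d powr \<phi>) = ennreal (3 * (2 powr \<phi> * d powr \<phi>))"
        by (subst ennreal_mult) auto
      also have "\<dots> \<le> ennreal (8 * d powr \<phi>)" using le by (rule ennreal_leI)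
      finally show ?thesis .
    qed
    finally show ?thesis by (simp add: V_def d_def \<phi>_def Es_def)
  qed
qed



end
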